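(* In the setting described in the context, assume $N<\infty$ and $n$ is even. Then $$\frac{\sqrt2}4<\sqrt{\frac{(N-2)N^2}{8(N-1)^3}}\le\sigma f\big(\tfrac n2\big),$$ with equality in the second inequality iff $n=2$ or $n=N-2$.
   Context: Standing setting: Binomial law $\mathrm B_{m,p}(\{k\})=\binom mk p^k(1-p)^{m-k}$; hypergeometric law $\mathrm H_{m,r,b}(\{k\})=\binom rk\binom b{m-k}/\binom{r+b}m$ ($r,b\in\mathbb N_0$, $m\in\{0,\dots,r+b\}$, $k\in\mathbb Z$, binomial coefficients with non-integer lower index being $0$). $P$ is a symmetric (about its mean) hypergeometric or symmetric binomial law with mean $\frac n2$ and standard deviation $\sigma>0$, and $f(k)=P(\{k\})$; $N\in\mathbb N\cup\{\infty\}$ is a population size parameter of $P$ (i.e. $N=\infty$ and $P$ binomial, or $P=\mathrm H_{m,r,b}$ for some $r,b,m$ with $r+b=N$). *)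

theory Defs
  imports Complex_Main
begin

definition hyp_pmf :: "nat \<Rightarrow> nat \<Rightarrow> nat \<Rightarrow> int \<Rightarrow> real" where
  "hyp_pmf m r b k =
     (if 0 \<le> k \<and> k \<le> int m
      then real (r choose nat k) * real (b choose (m - nat k)) / real ((r + b) choose m)
      else 0)"

definition hyp_mean :: "nat \<Rightarrow> nat \<Rightarrow> nat \<Rightarrow> real" where
  "hyp_mean m r b = (\<Sum>k\<in>{0..int m}. real_of_int k * hyp_pmf m r b k)"

definition hyp_var :: "nat \<Rightarrow> nat \<Rightarrow> nat \<Rightarrow> real" where
  "hyp_var m r b = (\<Sum>k\<in>{0..int m}. (real_of_int k - hyp_mean m r b)^2 * hyp_pmf m r b k)"

end

theory Submission
  imports Defs
begin

lemma choose_rec: "Suc k * (n choose Suc k) = (n - k) * (n choose k)"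
  using binomial_absorption[of k n] binomial_absorb_comp[of n k] by simp

lemma hr_gen: fixes A B Y Z c d :: real
  shows "A>0 \<Longrightarrow> B>0 \<Longrightarrow> Y>0 \<Longrightarrow> Z>0 \<Longrightarrow> d>0 \<Longrightarrow>
   (c*A/Y)^2 / (d*(2*A)*B/((2*Y)*Z)) = (c^2/d)*(A*Z/(Y*B))"
  by (simp add: field_simps power2_eq_square)

lemma e_gen: fixes A B Y Z W :: real
  shows "Y>0 \<Longrightarrow> B>0 \<Longrightarrow> Y*W*(A*Z/(Y*B))^2 = W*A*Z^2*A/(Y*B^2)"
  by (simp add: field_simps power2_eq_square)

definition Q :: "nat \<Rightarrow> nat \<Rightarrow> real" where
  "Q a j = real j * (real a - real j) / (2 * real a - 1)
     * (real (a choose j)^2 / real ((2*a) choose (2*j)))^2"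

lemma Qsym: "j \<le> a \<Longrightarrow> Q a (a - j) = Q a j"
proof -
  assume h: "j \<le> a"
  have 1: "a choose (a - j) = a choose j" using binomial_symmetric[OF h] by simp
  have 2: "(2*a) choose (2*(a-j)) = (2*a) choose (2*j)"
    using binomial_symmetric[of "2*j" "2*a"] h by (simp add: diff_mult_distrib2)
  show ?thesis unfolding Q_def 1 2 using h by (simp add: of_nat_diff)
qed

lemma Qstep:
  assumes i1: "1 \<le> i" and ia: "2*i+2 \<le> a"
  shows "Q a i < Q a (Suc i)"
proof -
  define c where "c = real (a choose i)"
  define c' where "c' = real (a choose Suc i)"
  define d where "d = real ((2*a) choose (2*i))"
  define d' where "d' = real ((2*a) choose (2*Suc i))"
  define x where "x = real a"
  define y where "y = real i"
  have cpos: "c > 0" unfolding c_def using ia by simp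
  have dpos: "d > 0" unfolding d_def using ia by simp
  have hc: "c' * (y+1) = c * (x - y)"
    using arg_cong[OF choose_rec[of i a], of real] ia unfolding c_def c'_def x_def y_def
    by (simp add: of_nat_diff algebra_simps)
  have r1: "real ((2*a) choose Suc (2*i)) * (2*y+1) = d * (2*x - 2*y)"
    using arg_cong[OF choose_rec[of "2*i" "2*a"], of real] ia unfolding d_def x_def y_def
    by (simp add: of_nat_diff algebra_simps)
  have r2a: "real (Suc (Suc (2*i))) * real ((2*a) choose Suc (Suc (2*i))) = real (2*a - Suc (2*i)) * real ((2*a) choose Suc (2*i))"
    using arg_cong[OF choose_rec[of "Suc (2*i)" "2*a"], of real] by (simp only: of_nat_mult)
  have r2b: "real (2*a - Suc (2*i)) = 2*x - 2*y - 1" unfolding x_def y_def using ia by (simp add: of_nat_diff)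
  have r2: "d' * (2*y+2) = real ((2*a) choose Suc (2*i)) * (2*x - 2*y - 1)"
    using r2a unfolding r2b d'_def y_def by (simp add: algebra_simps)
  have hd: "d' * (2*y+2) * (2*y+1) = d * (2*x - 2*y) * (2*x-2*y-1)"
  proof -
    have "d' * (2*y+2) * (2*y+1) = real ((2*a) choose Suc (2*i)) * (2*x - 2*y - 1) * (2*y+1)"
      using r2 by simp
    also have "\<dots> = (real ((2*a) choose Suc (2*i)) * (2*y+1)) * (2*x - 2*y - 1)" by (simp add: mult_ac)
    also have "\<dots> = d * (2*x - 2*y) * (2*x-2*y-1)" using r1 by simp
    finally show ?thesis .
  qed
  have y1: "y \<ge> 1" unfolding y_def using i1 by simp
  have xy: "x \<ge> 2*y+2" unfolding x_def y_def using ia by simp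
  define \<rho> where "\<rho> = (x - y) * (2*y+1) / ((y+1) * (2*x - 2*y - 1))"
  have c'eq: "c' = c * (x-y) / (y+1)" using hc y1 by (simp add: field_simps)
  have d'eq: "d' = d * (2*x - 2*y) * (2*x-2*y-1) / ((2*y+2)*(2*y+1))"
  proof -
    have "(2*y+2)*(2*y+1) \<noteq> 0" using y1 by simp
    thus ?thesis using hd by (simp add: eq_divide_eq mult.assoc)
  qed
  have hr: "c'^2/d' = (c^2/d) * \<rho>"
    unfolding c'eq d'eq \<rho>_def using hr_gen[of "x-y" "2*x-2*y-1" "y+1" "2*y+1" d c] y1 xy cpos dpos
    by (simp add: algebra_simps)
  have rpos: "\<rho> > 0" unfolding \<rho>_def using y1 xy by (intro divide_pos_pos mult_pos_pos) auto
  have poly: "(x-y-1)*(x-y)*(2*y+1)^2 > y*(y+1)*(2*x-2*y-1)^2"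
  proof -
    have "(x-y-1)*(x-y)*(2*y+1)^2 - y*(y+1)*(2*x-2*y-1)^2 = ((x-1-y) - y)*((x-1-y)+y+1)"
      by (simp add: algebra_simps power2_eq_square)
    moreover have "((x-1-y) - y)*((x-1-y)+y+1) > 0" using xy y1 by (intro mult_pos_pos) auto
    ultimately show ?thesis by linarith
  qed
  have ineq: "(y+1)*(x-y-1)*\<rho>^2 > y*(x-y)"
  proof -
    have e: "(y+1)*(x-y-1)*\<rho>^2 = (x-y-1)*(x-y)*(2*y+1)^2 * (x-y) / ((y+1)*(2*x-2*y-1)^2)"
      unfolding \<rho>_def using e_gen[of "y+1" "2*x-2*y-1" "x-y-1" "x-y" "2*y+1"] y1 xy by simp
    have p: "(y+1)*(2*x-2*y-1)^2 > 0" using y1 xy by auto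
    have "y*(x-y) = y*(y+1)*(2*x-2*y-1)^2 * (x-y) / ((y+1)*(2*x-2*y-1)^2)"
      using p y1 by (simp add: field_simps)
    also have "\<dots> < (x-y-1)*(x-y)*(2*y+1)^2 * (x-y) / ((y+1)*(2*x-2*y-1)^2)"
      using poly p xy y1 by (intro divide_strict_right_mono mult_strict_right_mono) auto
    finally show ?thesis using e by simp
  qed
  have X: "(c^2/d)^2 > 0" using cpos dpos by simp
  have den: "2*x - 1 > 0" using xy y1 by simp
  have "Q a i = y*(x-y)/(2*x-1) * (c^2/d)^2" unfolding Q_def c_def d_def x_def y_def by simp
  also have "\<dots> < (y+1)*(x-y-1)*\<rho>^2/(2*x-1) * (c^2/d)^2"
    using ineq X den by (intro mult_strict_right_mono divide_strict_right_mono) auto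
  also have "\<dots> = (y+1)*(x-y-1)/(2*x-1) * (c'^2/d')^2"
    unfolding hr power_mult_distrib[of "c^2/d" \<rho>] by (simp only: mult_ac times_divide_eq_left times_divide_eq_right)
  also have "\<dots> = Q a (Suc i)" unfolding Q_def c'_def d'_def x_def y_def by (simp add: algebra_simps)
  finally show ?thesis .
qed

lemma Qmono: "2 \<le> j \<Longrightarrow> 2*j \<le> a \<Longrightarrow> Q a 1 < Q a j"
proof (induction j rule: dec_induct)
  case base
  then show ?case using Qstep[of 1 a] by (simp add: numeral_2_eq_2)
next
  case (step j)
  then have "Q a 1 < Q a j" by simp
  also have "\<dots> < Q a (Suc j)" using Qstep[of j a] step by simp
  finally show ?case .
qed

lemma Qmain:
  assumes "1 \<le> j" "j + 1 \<le> a"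
  shows "Q a 1 \<le> Q a j \<and> (Q a 1 = Q a j \<longleftrightarrow> j = 1 \<or> j + 1 = a)"
proof (cases "j = 1 \<or> j + 1 = a")
  case True
  then show ?thesis
  proof
    assume "j = 1" then show ?thesis by simp
  next
    assume h: "j + 1 = a"
    then have "Q a j = Q a 1" using Qsym[of 1 a] by (simp add: h[symmetric])
    then show ?thesis using h by simp
  qed
next
  case False
  have "Q a 1 < Q a j"
  proof (cases "2*j \<le> a")
    case True
    then show ?thesis using Qmono[of j a] False assms by simp
  next
    case F2: False
    have "Q a 1 < Q a (a - j)" using Qmono[of "a-j" a] False F2 assms by simp
    also have "\<dots> = Q a j" using Qsym[of j a] assms by simp
    finally show ?thesis .
  qed
  then show ?thesis using False by simp
qed


lemma sum_int_nat: "(\<Sum>k\<in>{0..int m}. g k) = (\<Sum>k\<le>m. g (int k))"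
proof -
  have "{0..int m} = int ` {0..m}" by (simp add: image_int_atLeastAtMost)
  then show ?thesis by (simp add: sum.reindex atLeast0AtMost)
qed

lemma V1: "m \<ge> 1 \<Longrightarrow> (\<Sum>k\<le>m. k * (r choose k) * (b choose (m-k))) = r * ((r+b-1) choose (m-1))"
proof -
  assume "m \<ge> 1"
  then obtain m' where m: "m = Suc m'" by (cases m) auto
  have "(\<Sum>k\<le>m. k * (r choose k) * (b choose (m-k)))
      = (\<Sum>k\<le>m'. Suc k * (r choose Suc k) * (b choose (m' - k)))"
    unfolding m sum.atMost_Suc_shift by simp
  also have "\<dots> = (\<Sum>k\<le>m'. r * (((r-1) choose k) * (b choose (m' - k))))"
    by (rule sum.cong[OF refl]) (simp only: binomial_absorption mult.assoc)
  also have "\<dots> = r * ((r - 1 + b) choose m')"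
    by (simp add: sum_distrib_left[symmetric] vandermonde)
  also have "\<dots> = r * ((r+b-1) choose (m-1))" by (cases r) (auto simp: m)
  finally show ?thesis .
qed

lemma abs2: "Suc (Suc k) * Suc k * (r choose Suc (Suc k)) = r*(r-1)*((r-2) choose k)"
proof -
  have 1: "Suc(Suc k) * (r choose Suc(Suc k)) = r * ((r-1) choose Suc k)" by (rule binomial_absorption)
  have 2: "Suc k * ((r-1) choose Suc k) = (r-1)*((r-2) choose k)"
  proof -
    have e: "r - 1 - 1 = r - 2" by simp
    show ?thesis using binomial_absorption[of k "r-1"] by (simp only: e)
  qed
  have "Suc (Suc k) * Suc k * (r choose Suc (Suc k)) = Suc k * (Suc(Suc k) * (r choose Suc(Suc k)))"
    by (simp only: mult_ac)
  also have "\<dots> = r * (Suc k * ((r-1) choose Suc k))" unfolding 1 by (simp only: mult_ac)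
  also have "\<dots> = r*(r-1)*((r-2) choose k)" unfolding 2 by (simp only: mult_ac)
  finally show ?thesis .
qed

lemma V2: "m \<ge> 2 \<Longrightarrow> (\<Sum>k\<le>m. k * (k - 1) * (r choose k) * (b choose (m-k)))
   = r * (r - 1) * ((r+b-2) choose (m-2))"
proof -
  assume "m \<ge> 2"
  then obtain m' where m: "m = Suc (Suc m')" by (metis add_2_eq_Suc le_Suc_ex)
  have "(\<Sum>k\<le>m. k * (k - 1) * (r choose k) * (b choose (m-k)))
      = (\<Sum>k\<le>m'. (Suc (Suc k) * Suc k * (r choose Suc (Suc k))) * (b choose (m' - k)))"
    unfolding m sum.atMost_Suc_shift by simp
  also have "\<dots> = (\<Sum>k\<le>m'. r * (r - 1) * (((r-2) choose k) * (b choose (m' - k))))"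
    by (rule sum.cong[OF refl]) (subst abs2, simp only: mult.assoc)
  also have "\<dots> = r * (r - 1) * ((r - 2 + b) choose m')"
    by (simp add: sum_distrib_left[symmetric] vandermonde)
  also have "\<dots> = r * (r - 1) * ((r+b-2) choose (m-2))"
    by (cases "r \<ge> 2") (auto simp: m)
  finally show ?thesis .
qed

lemma pmf_nat: "k \<le> m \<Longrightarrow> hyp_pmf m r b (int k)
   = real (r choose k) * real (b choose (m-k)) / real ((r+b) choose m)"
  by (simp add: hyp_pmf_def)

lemma E0: "m \<le> r + b \<Longrightarrow> (\<Sum>k\<le>m. hyp_pmf m r b (int k)) = 1"
proof -
  assume h: "m \<le> r + b"
  have "(\<Sum>k\<le>m. hyp_pmf m r b (int k))
      = (\<Sum>k\<le>m. real ((r choose k) * (b choose (m-k)))) / real ((r+b) choose m)"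
    by (simp add: pmf_nat sum_divide_distrib)
  also have "\<dots> = 1" using h by (simp only: of_nat_sum[symmetric] vandermonde) simp
  finally show ?thesis .
qed

lemma E1: "m \<le> r + b \<Longrightarrow> hyp_mean m r b = real m * real r / real (r + b)"
proof -
  assume h: "m \<le> r + b"
  have "hyp_mean m r b = (\<Sum>k\<le>m. real (k * (r choose k) * (b choose (m-k)))) / real ((r+b) choose m)"
    unfolding hyp_mean_def sum_int_nat by (simp add: pmf_nat sum_divide_distrib mult.assoc)
  also have "\<dots> = real m * real r / real (r + b)"
  proof (cases "m = 0")
    case True then show ?thesis by simp
  next
    case False
    have s: "(\<Sum>k\<le>m. real (k * (r choose k) * (b choose (m-k)))) = real (r * ((r+b-1) choose (m-1)))"
      using V1[of m r b] False by (simp only: of_nat_sum[symmetric] Suc_le_eq)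
    have t: "real m * real ((r+b) choose m) = real (r+b) * real ((r+b-1) choose (m-1))"
      using times_binomial_minus1_eq[of m "r+b"] False by (simp only: of_nat_mult[symmetric])
    have p1: "real ((r+b) choose m) > 0" using h by simp
    have p2: "real (r + b) > 0" using h False by simp
    have "real r * real ((r+b-1) choose (m-1)) * real (r+b) = real m * real r * real ((r+b) choose m)"
      using t by (simp add: mult_ac)
    then show ?thesis unfolding s unfolding of_nat_mult using p1 p2 by (simp add: frac_eq_eq)
  qed
  finally show ?thesis .
qed

lemma real_kk: "real k * (real k - 1) = real (k * (k - 1))"
  by (cases k) (auto simp: algebra_simps)

lemma real_km1: "real k * (real (k - 1) * z) = real k * ((real k - 1) * z)"
  by (cases k) auto

lemma real_kkX: "real (r*(r-1)*X) = real r*(real r-1)*real X"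
  by (cases r) (auto simp: algebra_simps)

lemma E2: "m \<le> r + b \<Longrightarrow> (\<Sum>k\<le>m. real k * (real k - 1) * hyp_pmf m r b (int k))
   = real r * (real r - 1) * real m * (real m - 1) / (real (r+b) * (real (r+b) - 1))"
proof -
  assume h: "m \<le> r + b"
  show ?thesis
  proof (cases "m \<ge> 2")
    case False
    then have "m = 0 \<or> m = 1" by auto
    then show ?thesis
    proof
      assume "m = 0" then show ?thesis by simp
    next
      assume m1: "m = 1"
      have "(\<Sum>k\<le>m. real k * (real k - 1) * hyp_pmf m r b (int k)) = 0"
        unfolding m1 by simp
      then show ?thesis using m1 by simp
    qed
  next
    case True
    define N where "N = r + b"
    have "(\<Sum>k\<le>m. real k * (real k - 1) * hyp_pmf m r b (int k))
      = (\<Sum>k\<le>m. real (k * (k - 1) * (r choose k) * (b choose (m-k)))) / real (N choose m)"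
      unfolding sum_divide_distrib N_def
      by (rule sum.cong[OF refl]) (simp only: pmf_nat atMost_iff of_nat_mult real_km1 mult.assoc times_divide_eq_right)
    also have "\<dots> = real (r * (r - 1) * ((N-2) choose (m-2))) / real (N choose m)"
      using V2[of m r b] True unfolding N_def by (simp only: of_nat_sum[symmetric])
    also have "\<dots> = real r * (real r - 1) * real m * (real m - 1) / (real N * (real N - 1))"
    proof -
      have a1: "m * (N choose m) = N * ((N-1) choose (m-1))"
        using times_binomial_minus1_eq[of m N] True by simp
      have a2: "(m-1) * ((N-1) choose (m-1)) = (N-1) * ((N-2) choose (m-2))"
      proof -
        have e1: "N - 1 - 1 = N - 2" "m - 1 - 1 = m - 2" by simp_all
        have "0 < m - 1" using True by simp
        from times_binomial_minus1_eq[OF this, of "N-1"] show ?thesis by (simp only: e1)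
      qed
      have a3: "(m * (m-1)) * (N choose m) = (N * (N-1)) * ((N-2) choose (m-2))"
      proof -
        have "(m * (m-1)) * (N choose m) = (m-1) * (m * (N choose m))" by (simp only: mult_ac)
        also have "\<dots> = N * ((m-1) * ((N-1) choose (m-1)))" unfolding a1 by (simp only: mult_ac)
        also have "\<dots> = (N * (N-1)) * ((N-2) choose (m-2))" unfolding a2 by (simp only: mult_ac)
        finally show ?thesis .
      qed
      have a4: "real m * (real m - 1) * real (N choose m) = real N * (real N - 1) * real ((N-2) choose (m-2))"
      proof -
        have "1 \<le> N" "1 \<le> m" using h True unfolding N_def by simp_all
        then show ?thesis using arg_cong[OF a3, of real] by (simp add: of_nat_diff)
      qed
      have p1: "real (N choose m) > 0" using h unfolding N_def by simp
      have p2: "real N * (real N - 1) > 0" using h True unfolding N_def by simp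
      have hx: "real r * (real r - 1) * real ((N-2) choose (m-2)) * (real N * (real N - 1))
          = real r * (real r - 1) * real m * (real m - 1) * real (N choose m)"
        using a4 by (simp add: mult_ac)
      have ne1: "real (N choose m) \<noteq> 0" using p1 by linarith
      have ne2: "real N * (real N - 1) \<noteq> 0" using p2 by linarith
      show ?thesis unfolding real_kkX frac_eq_eq[OF ne1 ne2] using hx .
    qed
    finally show ?thesis unfolding N_def .
  qed
qed

lemma Var: "m \<le> r + b \<Longrightarrow> hyp_var m r b =
   (\<Sum>k\<le>m. real k * (real k - 1) * hyp_pmf m r b (int k)) + hyp_mean m r b - (hyp_mean m r b)^2"
proof -
  assume h: "m \<le> r + b"
  define \<mu> where "\<mu> = hyp_mean m r b"
  define f where "f = hyp_pmf m r b"
  have m1: "(\<Sum>k\<le>m. real k * f (int k)) = \<mu>" unfolding \<mu>_def hyp_mean_def f_def sum_int_nat by simp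
  have m0: "(\<Sum>k\<le>m. f (int k)) = 1" unfolding f_def using E0[OF h] .
  have "hyp_var m r b = (\<Sum>k\<le>m. (real k - \<mu>)^2 * f (int k))"
    unfolding hyp_var_def sum_int_nat \<mu>_def f_def by simp
  also have "\<dots> = (\<Sum>k\<le>m. real k*(real k-1)*f (int k) + (1-2*\<mu>)*(real k * f (int k)) + \<mu>^2 * f (int k))"
    by (rule sum.cong[OF refl]) (simp add: power2_eq_square algebra_simps)
  also have "\<dots> = (\<Sum>k\<le>m. real k*(real k-1)*f (int k)) + (1-2*\<mu>)*(\<Sum>k\<le>m. real k * f (int k))
      + \<mu>^2 * (\<Sum>k\<le>m. f (int k))"
    by (simp add: sum.distrib sum_distrib_left)
  also have "\<dots> = (\<Sum>k\<le>m. real k*(real k-1)*f (int k)) + \<mu> - \<mu>^2"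
    unfolding m0 m1 by (simp add: power2_eq_square algebra_simps)
  finally show ?thesis unfolding \<mu>_def f_def .
qed


lemma choose2a: "a \<ge> 1 \<Longrightarrow> real ((2*a) choose 2) = real a * (2 * real a - 1)"
proof -
  assume a: "a \<ge> 1"
  have "(2*a) choose 2 = 2*a*(2*a-1) div 2" by (simp add: choose_two)
  also have "\<dots> = a*(2*a-1)" by simp
  finally show ?thesis using a by (simp add: of_nat_diff)
qed

lemma Bform: fixes x :: real assumes x: "x \<ge> 2"
  shows "(x-1)/(2*x-1) * (x^2/(x*(2*x-1)))^2 = (2*x-2)*(2*x)^2/(8*(2*x-1)^3)"
proof -
  have c: "2*x-1 \<noteq> 0" "x \<noteq> 0" using x by auto
  have 1: "x^2/(x*(2*x-1)) = x/(2*x-1)" using c by (simp add: power2_eq_square)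
  have "(x-1)/(2*x-1) * (x/(2*x-1))^2 = (x-1)*x^2/(2*x-1)^3"
    by (simp add: power_divide power2_eq_square power3_eq_cube)
  also have "\<dots> = (8*((x-1)*x^2))/(8*(2*x-1)^3)"
    by (rule mult_divide_mult_cancel_left[symmetric]) simp
  also have "\<dots> = (2*x-2)*(2*x)^2/(8*(2*x-1)^3)"
  proof -
    have e: "(2*x-2)*(2*x)^2 = 8*((x-1)*x^2)" by (simp add: power2_eq_square algebra_simps)
    show ?thesis by (simp only: e)
  qed
  finally show ?thesis unfolding 1 .
qed

lemma final:
  fixes N n a j :: nat and \<sigma> F :: real
  assumes N: "N = 2*a" and n: "n = 2*j" and j1: "1 \<le> j" and ja: "j+1 \<le> a"
    and s: "\<sigma> = sqrt (real j*(real a - real j)/(2*real a - 1))"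
    and F: "F = real (a choose j)^2 / real ((2*a) choose (2*j))"
  shows "sqrt 2 / 4 < sqrt ((real N - 2) * (real N)^2 / (8 * (real N - 1)^3))
    \<and> sqrt ((real N - 2) * (real N)^2 / (8 * (real N - 1)^3)) \<le> \<sigma> * F
    \<and> (sqrt ((real N - 2) * (real N)^2 / (8 * (real N - 1)^3)) = \<sigma> * F
         \<longleftrightarrow> n = 2 \<or> n + 2 = N)"
proof -
  have a2: "real a \<ge> 2" using j1 ja by simp
  have d: "2*real a - 1 > 0" "real a > 0" using a2 by auto
  have Fnn: "F \<ge> 0" unfolding F by simp
  have sF: "\<sigma> * F = sqrt (Q a j)"
    unfolding Q_def s F[symmetric] real_sqrt_mult real_sqrt_abs using Fnn by simp
  have B: "(real N - 2) * (real N)^2 / (8 * (real N - 1)^3) = Q a 1"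
  proof -
    have "Q a 1 = (real a - 1) / (2 * real a - 1) * (real a ^ 2 / (real a * (2 * real a - 1)))^2"
      unfolding Q_def using choose2a[of a] a2 by simp
    also have "\<dots> = (real N - 2) * (real N)^2 / (8 * (real N - 1)^3)"
      unfolding N using Bform[OF a2] by simp
    finally show ?thesis by simp
  qed
  have s2: "sqrt 2 / 4 = sqrt (1/8)"
    by (rule real_sqrt_unique[symmetric]) (auto simp: power_divide)
  have p1: "1/8 < Q a 1"
  proof -
    have "(2 * real a - 1)^3 < 8 * (real a - 1) * (real a)^2"
    proof -
      have "8 * (real a - 1) * (real a)^2 - (2 * real a - 1)^3 = 4 * (real a)^2 - 6 * real a + 1"
        by (simp add: power2_eq_square power3_eq_cube algebra_simps)
      moreover have "4 * (real a)^2 - 6 * real a + 1 > 0"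
      proof -
        have "4 * (real a)^2 \<ge> 8 * real a" using a2 by (simp add: power2_eq_square)
        then show ?thesis using a2 by linarith
      qed
      ultimately show ?thesis by linarith
    qed
    moreover have "Q a 1 = 8 * (real a - 1) * (real a)^2 / (2 * real a - 1)^3 / 8"
      using B unfolding N using d by (simp add: field_simps power2_eq_square power3_eq_cube)
    moreover have "(2 * real a - 1)^3 > 0" using a2 by simp
    ultimately have "8 * (real a - 1) * (real a)^2 / (2 * real a - 1)^3 > 1" "Q a 1 = 8 * (real a - 1) * (real a)^2 / (2 * real a - 1)^3 / 8"
      by (simp_all add: less_divide_eq)
    then show ?thesis by (metis divide_strict_right_mono zero_less_numeral)
  qed
  have M: "Q a 1 \<le> Q a j \<and> (Q a 1 = Q a j \<longleftrightarrow> j = 1 \<or> j + 1 = a)" using Qmain[OF j1 ja] .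
  have e: "(j = 1 \<or> j + 1 = a) \<longleftrightarrow> (n = 2 \<or> n + 2 = N)" unfolding n N by auto
  show ?thesis unfolding B sF s2 using p1 M e by (simp add: real_sqrt_less_mono)
qed


lemma ident: assumes "j \<le> a"
  shows "real ((2*j) choose j) * real ((2*a-2*j) choose (a-j)) / real ((2*a) choose a)
       = real (a choose j)^2 / real ((2*a) choose (2*j))"
proof -
  have e1: "2*j - j = j" "2*a-2*j-(a-j) = a-j" "2*a - a = a" "2*a - 2*j = 2*(a-j)" using assms by auto
  have b1: "real ((2*j) choose j) = fact (2*j) / (fact j * fact j)"
    using binomial_fact[of j "2*j"] e1 by simp
  have b2: "real ((2*a-2*j) choose (a-j)) = fact (2*(a-j)) / (fact (a-j) * fact (a-j))"
    using binomial_fact[of "a-j" "2*a-2*j"] e1 assms by simp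
  have b3: "real ((2*a) choose a) = fact (2*a) / (fact a * fact a)"
    using binomial_fact[of a "2*a"] e1 by simp
  have b4: "real (a choose j) = fact a / (fact j * fact (a-j))"
    using binomial_fact[of j a] assms by simp
  have b5: "real ((2*a) choose (2*j)) = fact (2*a) / (fact (2*j) * fact (2*(a-j)))"
    using binomial_fact[of "2*j" "2*a"] assms e1 by simp
  show ?thesis unfolding b1 b2 b3 b4 b5
    by (simp add: field_simps power2_eq_square)
qed

lemma varform: fixes x y :: real assumes "x \<ge> 1"
  shows "x*(x-1)*(2*y)*(2*y-1)/((2*x)*(2*x-1)) + y - y^2 = y*(x-y)/(2*x-1)"
proof -
  have c: "2*x-1 \<noteq> 0" "x \<noteq> 0" using assms by auto
  have "x*(x-1)*(2*y)*(2*y-1)/((2*x)*(2*x-1)) = (x-1)*y*(2*y-1)/(2*x-1)"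
    using c by (simp add: field_simps)
  moreover have "(x-1)*y*(2*y-1)/(2*x-1) + y - y^2 = y*(x-y)/(2*x-1)"
    using c by (simp add: field_simps power2_eq_square)
  ultimately show ?thesis by simp
qed

lemma pos_supp: "hyp_pmf m r b k > 0 \<Longrightarrow> int (m - b) \<le> k \<and> k \<le> int (min m r)"
proof -
  assume p: "hyp_pmf m r b k > 0"
  then have k: "0 \<le> k \<and> k \<le> int m" unfolding hyp_pmf_def by (auto split: if_splits)
  then have "real (r choose nat k) * real (b choose (m - nat k)) / real ((r + b) choose m) > 0"
    using p unfolding hyp_pmf_def by simp
  then have "r choose nat k \<noteq> 0" "b choose (m - nat k) \<noteq> 0"
    by (metis less_irrefl mult_zero_left div_0 of_nat_0,
        metis less_irrefl mult_zero_right div_0 of_nat_0)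
  then have "nat k \<le> r" "m - nat k \<le> b" by auto
  then show ?thesis using k by auto
qed

lemma supp_L: "m \<le> r + b \<Longrightarrow> hyp_pmf m r b (int (m - b)) > 0"
  unfolding hyp_pmf_def by auto

lemma supp_U: "m \<le> r + b \<Longrightarrow> hyp_pmf m r b (int (min m r)) > 0"
  unfolding hyp_pmf_def by auto


theorem lemma4p2:
  fixes m r b N n :: nat and \<sigma> :: real and f :: "int \<Rightarrow> real"
  assumes "m \<le> r + b"
    and "N = r + b"
    and "f = hyp_pmf m r b"
    and "hyp_mean m r b = real n / 2"
    and "\<forall>k. f (int n - k) = f k"
    and "\<sigma> = sqrt (hyp_var m r b)"
    and "\<sigma> > 0"
    and "even n"
  shows "sqrt 2 / 4 < sqrt ((real N - 2) * (real N)^2 / (8 * (real N - 1)^3))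
    \<and> sqrt ((real N - 2) * (real N)^2 / (8 * (real N - 1)^3)) \<le> \<sigma> * f (int (n div 2))
    \<and> (sqrt ((real N - 2) * (real N)^2 / (8 * (real N - 1)^3)) = \<sigma> * f (int (n div 2))
         \<longleftrightarrow> n = 2 \<or> n + 2 = N)"
proof -
  have h: "m \<le> r + b" using assms(1) .
  define \<mu> where "\<mu> = hyp_mean m r b"
  have mu: "\<mu> = real m * real r / real (r+b)" using E1[OF h] \<mu>_def by simp
  have var: "hyp_var m r b = real r*(real r - 1)*real m*(real m - 1)/(real (r+b)*(real (r+b)-1)) + \<mu> - \<mu>^2"
    using Var[OF h] E2[OF h] \<mu>_def by simp
  have vpos: "hyp_var m r b > 0" using assms(6,7) by simp
  have N2: "r + b \<ge> 2"
  proof (rule ccontr)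
    assume nt: "\<not> ?thesis"
    then have rm: "(r = 0 \<or> (r = 1 \<and> b = 0)) \<and> (m = 0 \<or> m = 1)" using h by auto
    have "hyp_var m r b = 0" using rm unfolding var mu by auto
    with vpos show False by simp
  qed
  have m0: "m \<noteq> 0"
  proof
    assume "m = 0" then have "hyp_var m r b = 0" unfolding var mu by simp
    with vpos show False by simp
  qed
  have r0: "r \<noteq> 0"
  proof
    assume "r = 0" then have "hyp_var m r b = 0" unfolding var mu by simp
    with vpos show False by simp
  qed
  have b0: "b \<noteq> 0"
  proof
    assume b: "b = 0"
    define x where "x = real r"
    have x2: "x \<ge> 2" using N2 b x_def by simp
    have rb: "real (r+b) = x" using b x_def by simp
    have "hyp_var m r b = x*(x-1)*real m*(real m - 1)/(x*(x-1)) + real m * x / x - (real m * x / x)^2"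
      unfolding var mu rb x_def[symmetric] by (rule refl)
    also have "\<dots> = 0"
    proof -
      have nz: "x*(x-1) \<noteq> 0" "x \<noteq> 0" using x2 by auto
      have "x*(x-1)*real m*(real m - 1)/(x*(x-1)) = real m*(real m - 1)" using nz by simp
      moreover have "real m * x / x = real m" using nz by simp
      ultimately show ?thesis by (simp add: power2_eq_square algebra_simps)
    qed
    finally show False using vpos by simp
  qed
  have mN: "m \<noteq> r + b"
  proof
    assume mm: "m = r + b"
    define x where "x = real m"
    have x2: "x \<ge> 2" using N2 mm x_def by simp
    have rb: "real (r+b) = x" using mm x_def by simp
    have "hyp_var m r b = real r*(real r - 1)*x*(x-1)/(x*(x-1)) + x * real r / x - (x * real r / x)^2"
      unfolding var mu rb x_def[symmetric] by (rule refl)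
    also have "\<dots> = 0"
    proof -
      have nz: "x*(x-1) \<noteq> 0" "x \<noteq> 0" using x2 by auto
      have "real r*(real r - 1)*x*(x-1)/(x*(x-1)) = real r*(real r - 1)" using nz
        by (simp add: mult.assoc[symmetric])
      moreover have "x * real r / x = real r" using nz by simp
      ultimately show ?thesis by (simp add: power2_eq_square algebra_simps)
    qed
    finally show False using vpos by simp
  qed
  define L where "L = m - b"
  define U where "U = min m r"
  have fL: "f (int L) > 0" unfolding L_def assms(3) using supp_L[OF h] .
  have fU: "f (int U) > 0" unfolding U_def assms(3) using supp_U[OF h] .
  have "f (int n - int L) > 0" using assms(5) fL by simp
  then have 1: "int n - int L \<le> int U" using pos_supp unfolding assms(3) L_def U_def by blast
  have "f (int n - int U) > 0" using assms(5) fU by simp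
  then have 2: "int L \<le> int n - int U" using pos_supp unfolding assms(3) L_def U_def by blast
  have nLU: "int n = int L + int U" using 1 2 by simp
  have Npos: "real (r + b) > 0" using N2 by simp
  have "real n * real (r+b) = 2 * real m * real r"
  proof -
    have a: "real n = 2*\<mu>" using assms(4) \<mu>_def by simp
    have c: "\<mu> * real (r+b) = real m * real r" using mu Npos by simp
    have "real n * real (r+b) = 2 * (\<mu> * real (r+b))" unfolding a by (simp add: mult.assoc)
    then show ?thesis unfolding c by simp
  qed
  then have eqN: "int n * (int r + int b) = 2 * int m * int r"
    by (metis (mono_tags) of_nat_add of_nat_eq_iff of_nat_mult of_nat_numeral)
  have key: "(r = b \<and> n = m) \<or> (2*m = r+b \<and> n = r)"
  proof (cases "m \<le> b")
    case True
    then have L0: "L = 0" unfolding L_def by simp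
    show ?thesis
    proof (cases "m \<le> r")
      case True
      then have "n = m" using nLU L0 unfolding U_def by simp
      then have "int m * (int r + int b) = int m * (2 * int r)" using eqN by (simp add: mult_ac)
      then have "int r + int b = 2 * int r" using m0 by simp
      then show ?thesis using \<open>n = m\<close> by simp
    next
      case False
      then have "n = r" using nLU L0 unfolding U_def by simp
      then have "int r * (int r + int b) = int r * (2 * int m)" using eqN by (simp add: mult_ac)
      then have "int r + int b = 2 * int m" using r0 by simp
      then show ?thesis using \<open>n = r\<close> by simp
    qed
  next
    case False
    then have L1: "int L = int m - int b" unfolding L_def by simp
    show ?thesis
    proof (cases "m \<le> r")
      case True
      then have nn: "int n = 2 * int m - int b" using nLU L1 unfolding U_def by simp
      have "int b * (2 * int m - int r - int b) = 0" using eqN unfolding nn by (simp add: algebra_simps)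
      then have "2 * int m = int r + int b" using b0 by simp
      then show ?thesis using nn by simp
    next
      case False
      then have nn: "int n = int m - int b + int r" using nLU L1 unfolding U_def by simp
      have "(int b - int r) * (int m - (int r + int b)) = 0" using eqN unfolding nn by (simp add: algebra_simps)
      then have "int b = int r" using mN by simp
      then show ?thesis using nn by simp
    qed
  qed
  obtain j where nj: "n = 2 * j" using assms(8) by (rule evenE)
  have ndiv: "n div 2 = j" using nj by simp
  show ?thesis
  using key proof
    assume k: "r = b \<and> n = m"
    define a where "a = r"
    have Na: "N = 2 * a" using assms(2) k a_def by simp
    have j1: "1 \<le> j" using m0 k nj by simp
    have ja: "j + 1 \<le> a" using mN h k nj a_def by simp
    have mu': "\<mu> = real j" unfolding mu using k nj a_def r0 by (simp add: field_simps)
    have "hyp_var m r b = real a*(real a-1)*(2*real j)*(2*real j-1)/((2*real a)*(2*real a-1)) + real j - real j^2"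
    proof -
      have e: "real m = 2 * real j" "real (r+b) = 2 * real a" "real r = real a" using k nj a_def by auto
      show ?thesis unfolding var mu' e by (simp only: mult_ac)
    qed
    also have "\<dots> = real j * (real a - real j)/(2*real a - 1)" using varform[of "real a" "real j"] ja by simp
    finally have s: "\<sigma> = sqrt (real j * (real a - real j)/(2*real a - 1))" using assms(6) by simp
    have F: "f (int (n div 2)) = real (a choose j)^2 / real ((2*a) choose (2*j))"
    proof -
      have mj: "m - j = j" "j \<le> m" using k nj by auto
      show ?thesis unfolding ndiv assms(3) pmf_nat[OF mj(2)] mj(1) using k nj a_def by (simp add: power2_eq_square mult_2)
    qed
    show ?thesis using final[OF Na nj j1 ja s F] .
  next
    assume k: "2*m = r+b \<and> n = r"
    define a where "a = m"
    have Na: "N = 2 * a" using assms(2) k a_def by simp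
    have j1: "1 \<le> j" using r0 k nj by simp
    have ja: "j + 1 \<le> a" using b0 k nj a_def by simp
    have bb: "b = 2*a - 2*j" using k nj a_def by simp
    have mu': "\<mu> = real j" unfolding mu using k nj a_def m0
    proof -
      have e: "real (r+b) = 2 * real m" "real r = 2 * real j" using k nj by (metis of_nat_mult of_nat_numeral)+
      show "real m * real r / real (r + b) = real j" unfolding e using m0 by simp
    qed
    have "hyp_var m r b = real a*(real a-1)*(2*real j)*(2*real j-1)/((2*real a)*(2*real a-1)) + real j - real j^2"
    proof -
      have e: "real (r+b) = 2 * real a" "real r = 2 * real j" "real m = real a"
        using k nj a_def by (metis of_nat_mult of_nat_numeral)+
      show ?thesis unfolding var mu' e by (simp only: mult_ac)
    qed
    also have "\<dots> = real j * (real a - real j)/(2*real a - 1)" using varform[of "real a" "real j"] ja by simp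
    finally have s: "\<sigma> = sqrt (real j * (real a - real j)/(2*real a - 1))" using assms(6) by simp
    have F: "f (int (n div 2)) = real (a choose j)^2 / real ((2*a) choose (2*j))"
    proof -
      have jm: "j \<le> m" using ja a_def by simp
      have "f (int (n div 2)) = real ((2*j) choose j) * real ((2*a-2*j) choose (a-j)) / real ((2*a) choose a)"
        unfolding ndiv assms(3) pmf_nat[OF jm] using k nj a_def bb by simp
      also have "\<dots> = real (a choose j)^2 / real ((2*a) choose (2*j))" using ident[of j a] ja by simp
      finally show ?thesis .
    qed
    show ?thesis using final[OF Na nj j1 ja s F] .
  qed
qed

end
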